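(* Let $G$ be a digraph with a fixed upward planar drawing, let $s,t\in V(G)$ and let $P$ be a directed path from $s$ to $t$ in $G$. If $P'$ is a directed $s$-$t$ path with $P'\cap\mathrm{Right}(P)\neq\emptyset$, then there is a directed $s$-$t$ path $Q$ such that $Q\subseteq P\cup\mathrm{Right}(P)$ and $Q\cap\mathrm{Right}(P)\neq\emptyset$.
   Context: An upward planar drawing of a digraph is a plane drawing (no edge crossings) in which every directed edge is a curve monotone increasing in the $y$-direction from tail to head. A path is identified with the set of points of $\mathbb{R}^2$ in its drawing. For a path $P$ with endpoints $(x,y)$, $(x',y')$, $y\le y'$, let $\mathrm{Right}(P):=\{(u,v)\in\mathbb{R}^2: y\le v\le y',\ u'<u \text{ for all } u' \text{ with } (u',v)\in P\}$. *)

theory Defs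
  imports "HOL-Analysis.Analysis"
begin

text \<open>A drawing assigns to each vertex a point
of the plane (real \<times> real, second coordinate = y) and to each edge a curve
(an arc, i.e. an injective continuous map on [0,1]).\<close>

definition digraph :: "'v set \<Rightarrow> ('v \<times> 'v) set \<Rightarrow> bool" where
  "digraph V E \<longleftrightarrow> finite V \<and> E \<subseteq> V \<times> V"

definition upward_planar_drawing ::
  "'v set \<Rightarrow> ('v \<times> 'v) set \<Rightarrow> ('v \<Rightarrow> real \<times> real)
     \<Rightarrow> ('v \<times> 'v \<Rightarrow> real \<Rightarrow> real \<times> real) \<Rightarrow> bool" where
  "upward_planar_drawing V E pos \<gamma> \<longleftrightarrow>
     inj_on pos V \<and>
     (\<forall>e\<in>E. arc (\<gamma> e) \<and> pathstart (\<gamma> e) = pos (fst e) \<and> pathfinish (\<gamma> e) = pos (snd e)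
        \<and> strict_mono_on {0..1} (\<lambda>r. snd (\<gamma> e r))) \<and>
     (\<forall>e\<in>E. \<forall>w\<in>V. pos w \<in> path_image (\<gamma> e) \<longrightarrow> w = fst e \<or> w = snd e) \<and>
     (\<forall>e1\<in>E. \<forall>e2\<in>E. e1 \<noteq> e2 \<longrightarrow>
        path_image (\<gamma> e1) \<inter> path_image (\<gamma> e2) \<subseteq> pos ` ({fst e1, snd e1} \<inter> {fst e2, snd e2}))"

definition dipath :: "'v set \<Rightarrow> ('v \<times> 'v) set \<Rightarrow> 'v \<Rightarrow> 'v \<Rightarrow> 'v list \<Rightarrow> bool" where
  "dipath V E s t ps \<longleftrightarrow> ps \<noteq> [] \<and> hd ps = s \<and> last ps = t \<and> distinct ps \<and>
     set ps \<subseteq> V \<and> (\<forall>i. Suc i < length ps \<longrightarrow> (ps ! i, ps ! Suc i) \<in> E)"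

definition path_points ::
  "('v \<Rightarrow> real \<times> real) \<Rightarrow> ('v \<times> 'v \<Rightarrow> real \<Rightarrow> real \<times> real) \<Rightarrow> 'v list \<Rightarrow> (real \<times> real) set" where
  "path_points pos \<gamma> ps = pos ` set ps \<union>
     (\<Union>i\<in>{i. Suc i < length ps}. path_image (\<gamma> (ps ! i, ps ! Suc i)))"

text \<open>Right(P) for a point set P with endpoints a, b where snd a \<le> snd b.\<close>

definition Right :: "(real \<times> real) set \<Rightarrow> real \<times> real \<Rightarrow> real \<times> real \<Rightarrow> (real \<times> real) set" where
  "Right P a b = {(u, v). snd a \<le> v \<and> v \<le> snd b \<and> (\<forall>u'. (u', v) \<in> P \<longrightarrow> u' < u)}"

end

theory Submission
  imports Defs
begin


definition es :: "'v list \<Rightarrow> ('v \<times> 'v) set" where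
  "es L = set (zip L (tl L))"

lemma es_nth: "es L = {(L!i, L!Suc i) | i. Suc i < length L}"
  unfolding es_def set_zip by (cases L) (auto simp: nth_tl)

lemma es_simps[simp]: "es [] = {}" "es [a] = {}" "es (a#b#r) = insert (a,b) (es (b#r))"
  by (auto simp: es_def)

lemma es_append: "es (xs @ ys) = es xs \<union> es ys \<union> (if xs \<noteq> [] \<and> ys \<noteq> [] then {(last xs, hd ys)} else {})"
proof (induction xs)
  case Nil then show ?case by simp
next
  case (Cons x xs)
  then show ?case
    by (cases xs; cases ys) (auto)
qed

lemma path_points_es: "path_points pos \<gamma> L = pos ` set L \<union> (\<Union>e\<in>es L. path_image (\<gamma> e))"
  unfolding path_points_def es_nth by auto

lemma dipath_es: "dipath V E s t L \<longleftrightarrow> L \<noteq> [] \<and> hd L = s \<and> last L = t \<and> distinct L \<and> set L \<subseteq> V \<and> es L \<subseteq> E"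
  unfolding dipath_def es_nth by auto

lemma es_take: "es (take n L) \<subseteq> es L"
proof -
  have "es (take n L) \<subseteq> es (take n L @ drop n L)" by (subst es_append) auto
  then show ?thesis by simp
qed
lemma es_drop: "es (drop n L) \<subseteq> es L"
proof -
  have "es (drop n L) \<subseteq> es (take n L @ drop n L)" by (subst es_append) auto
  then show ?thesis by simp
qed

lemma es_map_upt: "es (map f [i..<j]) = (\<lambda>l. (f l, f (Suc l))) ` {l. i \<le> l \<and> Suc l < j}"
proof (induction "j - i" arbitrary: i)
  case 0 then show ?case by auto
next
  case (Suc d)
  then have ij: "i < j" by auto
  show ?case
  proof (cases "Suc i < j")
    case True
    have "[i..<j] = i # Suc i # [Suc (Suc i)..<j]" using True by (simp add: upt_rec)
    then have "map f [i..<j] = f i # map f [Suc i..<j]" using True by (simp add: upt_rec)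
    moreover have "map f [Suc i..<j] = f (Suc i) # map f [Suc (Suc i)..<j]" using True by (simp add: upt_rec)
    ultimately have "es (map f [i..<j]) = insert (f i, f (Suc i)) (es (map f [Suc i..<j]))" by simp
    also have "\<dots> = insert (f i, f (Suc i)) ((\<lambda>l. (f l, f (Suc l))) ` {l. Suc i \<le> l \<and> Suc l < j})"
      using Suc(1)[of "Suc i"] Suc(2) by simp
    also have "{l. i \<le> l \<and> Suc l < j} = insert i {l. Suc i \<le> l \<and> Suc l < j}"
      using True by auto
    hence "insert (f i, f (Suc i)) ((\<lambda>l. (f l, f (Suc l))) ` {l. Suc i \<le> l \<and> Suc l < j}) = (\<lambda>l. (f l, f (Suc l))) ` {l. i \<le> l \<and> Suc l < j}"
      by simp
    finally show ?thesis .
  next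
    case False
    then have "j = Suc i" using ij by auto
    then show ?thesis by auto
  qed
qed

definition goode :: "('v \<Rightarrow> real \<times> real) \<Rightarrow> ('v \<times> 'v \<Rightarrow> real \<Rightarrow> real \<times> real) \<Rightarrow> 'v \<times> 'v \<Rightarrow> bool" where
  "goode pos \<gamma> e \<longleftrightarrow> arc (\<gamma> e) \<and> pathstart (\<gamma> e) = pos (fst e) \<and> pathfinish (\<gamma> e) = pos (snd e)
        \<and> strict_mono_on {0..1} (\<lambda>r. snd (\<gamma> e r))"

fun pl :: "('v \<times> 'v \<Rightarrow> real \<Rightarrow> real \<times> real) \<Rightarrow> 'v list \<Rightarrow> real \<Rightarrow> real \<times> real" where
  "pl \<gamma> (a#b#c#rest) = \<gamma> (a,b) +++ pl \<gamma> (b#c#rest)"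
| "pl \<gamma> [a,b] = \<gamma> (a,b)"
| "pl \<gamma> _ = (\<lambda>_. 0)"

lemma smono_join:
  fixes p q :: "real \<Rightarrow> real \<times> real"
  assumes "strict_mono_on {0..1} (\<lambda>r. snd (p r))" "strict_mono_on {0..1} (\<lambda>r. snd (q r))"
    and "p 1 = q 0"
  shows "strict_mono_on {0..1} (\<lambda>r. snd ((p +++ q) r))"
proof (rule strict_mono_onI)
  fix x y :: real assume xy: "x \<in> {0..1}" "y \<in> {0..1}" "x < y"
  show "snd ((p +++ q) x) < snd ((p +++ q) y)"
  proof (cases "y \<le> 1/2")
    case True
    then show ?thesis using xy assms(1) by (auto simp: joinpaths_def strict_mono_on_def)
  next
    case False
    show ?thesis
    proof (cases "x \<le> 1/2")
      case True
      have "snd (p (2*x)) \<le> snd (p 1)"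
      proof (cases "2*x = 1")
        case False
        then have "2*x < 1" using True by auto
        have "(\<lambda>r. snd (p r)) (2*x) < (\<lambda>r. snd (p r)) 1"
          by (rule strict_mono_onD[OF assms(1)]) (use xy \<open>2*x < 1\<close> in auto)
        then show ?thesis by linarith
      qed simp
      moreover have "snd (q 0) < snd (q (2*y-1))"
        using assms(2) xy False by (auto simp: strict_mono_on_def)
      ultimately show ?thesis using True False assms(3) by (auto simp: joinpaths_def)
    next
      case False
      then show ?thesis using xy assms(2) \<open>\<not> y \<le> 1/2\<close> by (auto simp: joinpaths_def strict_mono_on_def)
    qed
  qed
qed

lemma pl_props:
  assumes "2 \<le> length L" "\<forall>e\<in>es L. goode pos \<gamma> e"
  shows "path (pl \<gamma> L) \<and> pathstart (pl \<gamma> L) = pos (hd L) \<and> pathfinish (pl \<gamma> L) = pos (last L)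
    \<and> strict_mono_on {0..1} (\<lambda>r. snd (pl \<gamma> L r)) \<and> path_image (pl \<gamma> L) = path_points pos \<gamma> L"
  using assms
proof (induction \<gamma> L rule: pl.induct)
  case (1 \<gamma> a b c rest)
  let ?q = "pl \<gamma> (b#c#rest)"
  have IH: "path ?q \<and> pathstart ?q = pos b \<and> pathfinish ?q = pos (last (b#c#rest))
    \<and> strict_mono_on {0..1} (\<lambda>r. snd (?q r)) \<and> path_image ?q = path_points pos \<gamma> (b#c#rest)"
    using 1 by auto
  have g: "goode pos \<gamma> (a,b)" using 1(3) by auto
  hence "arc (\<gamma> (a,b))" "pathstart (\<gamma> (a,b)) = pos a" "pathfinish (\<gamma> (a,b)) = pos b"
     "strict_mono_on {0..1} (\<lambda>r. snd (\<gamma> (a,b) r))" by (auto simp: goode_def)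
  moreover have "path_points pos \<gamma> (a#b#c#rest) = path_image (\<gamma> (a,b)) \<union> path_points pos \<gamma> (b#c#rest)"
  proof -
    have "pos a \<in> path_image (\<gamma> (a,b))" "pos b \<in> path_image (\<gamma> (a,b))"
      using calculation pathstart_in_path_image pathfinish_in_path_image by metis+
    then show ?thesis unfolding path_points_es by auto
  qed
  ultimately show ?case using IH
  proof (intro conjI)
    assume A: "arc (\<gamma> (a,b))" "pathstart (\<gamma> (a,b)) = pos a" "pathfinish (\<gamma> (a,b)) = pos b"
     "strict_mono_on {0..1} (\<lambda>r. snd (\<gamma> (a,b) r))"
     "path_points pos \<gamma> (a#b#c#rest) = path_image (\<gamma> (a,b)) \<union> path_points pos \<gamma> (b#c#rest)"
    have pj: "pathfinish (\<gamma>(a,b)) = pathstart ?q" using A IH by simp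
    show "path (pl \<gamma> (a # b # c # rest))" using pj A IH by (simp add: path_join arc_imp_path)
    show "pathstart (pl \<gamma> (a # b # c # rest)) = pos (hd (a # b # c # rest))" using A by simp
    show "pathfinish (pl \<gamma> (a # b # c # rest)) = pos (last (a # b # c # rest))" using IH by simp
    show "strict_mono_on {0..1} (\<lambda>r. snd (pl \<gamma> (a # b # c # rest) r))"
      using A IH pj by (simp add: smono_join pathstart_def pathfinish_def)
    show "path_image (pl \<gamma> (a # b # c # rest)) = path_points pos \<gamma> (a # b # c # rest)"
      using A IH pj by (simp add: path_image_join)
  qed
next
  case (2 \<gamma> a b)
  then have "goode pos \<gamma> (a,b)" by auto
  moreover have "\<gamma> (a,b) 0 \<in> \<gamma> (a,b) ` {0..1}" "\<gamma> (a,b) 1 \<in> \<gamma> (a,b) ` {0..1}" by auto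
  ultimately show ?case unfolding path_points_es goode_def
    by (auto simp: arc_imp_path path_image_def pathstart_def pathfinish_def)
qed auto



lemma sep:
  fixes g :: "real \<Rightarrow> real \<times> real"
  assumes pg: "path g" and sm: "strict_mono_on {0..1} (\<lambda>r. snd (g r))"
    and C: "connected C" "C \<subseteq> {z. snd (g 0) \<le> snd z \<and> snd z \<le> snd (g 1)}" "C \<inter> g`{0..1} = {}"
    and p: "p \<in> C" "p \<in> Right (g`{0..1}) (g 0) (g 1)" and q: "q \<in> C"
  shows "q \<in> Right (g`{0..1}) (g 0) (g 1)"
proof (rule ccontr)
  assume nq: "q \<notin> Right (g`{0..1}) (g 0) (g 1)"
  define h where "h = (\<lambda>r. snd (g r))"
  have ch: "continuous_on {0..1} h" unfolding h_def
    using pg unfolding path_def by (intro continuous_intros)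
  have inj: "inj_on h {0..1}" unfolding h_def using sm by (rule strict_mono_on_imp_inj_on)
  define hi where "hi = inv_into {0..1} h"
  have chi: "continuous_on (h ` {0..1}) hi" unfolding hi_def
    using continuous_on_inv[OF ch compact_Icc] inj by auto
  have hin: "v \<in> h ` {0..1}" if v1: "snd (g 0) \<le> v" "v \<le> snd (g 1)" for v
  proof -
    have "h 0 \<le> v" "v \<le> h 1" using v1 unfolding h_def by auto
    then obtain r where "0 \<le> r" "r \<le> 1" "h r = v" using IVT'[of h 0 v 1, OF _ _ _ ch] by auto
    then show ?thesis by force
  qed
  have hiin: "hi v \<in> {0..1}" if "v \<in> h ` {0..1}" for v
    unfolding hi_def using that by (rule inv_into_into)
  have hhi: "h (hi v) = v" if "v \<in> h ` {0..1}" for v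
    unfolding hi_def using that by (rule f_inv_into_f)
  define f where "f v = fst (g (hi v))" for v
  have gfv: "g (hi v) = (f v, v)" if "v \<in> h ` {0..1}" for v
    using hhi[OF that] unfolding f_def h_def by (metis prod.collapse)
  have onP: "(u, v) \<in> g ` {0..1} \<longleftrightarrow> u = f v" if "v \<in> h ` {0..1}" for u v
  proof
    assume "(u, v) \<in> g ` {0..1}"
    then obtain r where r: "r \<in> {0..1}" "g r = (u, v)" by auto
    then have "h r = v" unfolding h_def by simp
    then have "hi v = r" unfolding hi_def using inj r(1) by auto
    then show "u = f v" using r unfolding f_def by simp
  next
    assume "u = f v"
    then show "(u, v) \<in> g ` {0..1}" using gfv[OF that] hiin[OF that] by (metis image_eqI)
  qed
  define S where "S = {z::real\<times>real. snd (g 0) \<le> snd z \<and> snd z \<le> snd (g 1)}"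
  have SH: "snd ` S \<subseteq> h ` {0..1}" unfolding S_def using hin by auto
  have cf: "continuous_on (h ` {0..1}) f"
  proof -
    have "continuous_on (h ` {0..1}) (fst \<circ> g \<circ> hi)"
    proof (rule continuous_on_compose)
      show "continuous_on (h ` {0..1}) hi" by (rule chi)
      have "continuous_on {0..1} (fst \<circ> g)"
        using pg unfolding path_def by (intro continuous_on_compose continuous_on_fst continuous_on_id) auto
      moreover have "hi ` h ` {0..1} \<subseteq> {0..1}" using hiin by blast
      ultimately show "continuous_on (hi ` h ` {0..1}) (fst \<circ> g)"
        by (rule continuous_on_subset)
    qed
    then show ?thesis unfolding f_def o_def by simp
  qed
  define \<sigma> where "\<sigma> z = fst z - f (snd z)" for z
  have cs: "continuous_on S \<sigma>"
  proof -
    have "continuous_on S (f \<circ> snd)"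
      by (rule continuous_on_compose) (auto intro: continuous_intros continuous_on_subset[OF cf SH])
    then show ?thesis unfolding \<sigma>_def o_def by (intro continuous_intros) auto
  qed
  have CS: "C \<subseteq> S" using C(2) unfolding S_def .
  have conn: "connected (\<sigma> ` C)"
    by (rule connected_continuous_image[OF continuous_on_subset[OF cs CS] C(1)])
  obtain pu pv where pp: "p = (pu, pv)" by fastforce
  have pvH: "pv \<in> h ` {0..1}" using SH image_eqI[of pv snd p S] CS p(1) pp by auto
  have "f pv < pu" using p(2) onP[OF pvH] unfolding pp Right_def by auto
  then have sp: "\<sigma> p > 0" unfolding \<sigma>_def pp by simp
  obtain qu qv where qq: "q = (qu, qv)" by fastforce
  have qvH: "qv \<in> h ` {0..1}" using SH image_eqI[of qv snd q S] CS q qq by auto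
  have qS: "snd (g 0) \<le> qv \<and> qv \<le> snd (g 1)" using CS q qq unfolding S_def by auto
  then obtain u' where "(u', qv) \<in> g ` {0..1}" "\<not> u' < qu"
    using nq unfolding qq Right_def by auto
  then have "\<not> f qv < qu" using onP[OF qvH] by auto
  then have sq: "\<sigma> q \<le> 0" unfolding \<sigma>_def qq by simp
  have "0 \<in> \<sigma> ` C"
    using mem_is_interval_1_I[of "\<sigma> ` C" "\<sigma> q" "\<sigma> p" 0] conn is_interval_connected_1 sp sq p(1) q
    by auto
  then obtain c where c: "c \<in> C" "\<sigma> c = 0" by auto
  obtain cu cv where cc: "c = (cu, cv)" by fastforce
  have cvH: "cv \<in> h ` {0..1}" using SH image_eqI[of cv snd c S] CS c(1) cc by auto
  have "cu = f cv" using c(2) unfolding cc \<sigma>_def by simp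
  then have "c \<in> g ` {0..1}" using onP[OF cvH] cc by simp
  then show False using C(3) c(1) by auto
qed



lemma es_set: "(a,b) \<in> es L \<Longrightarrow> a \<in> set L \<and> b \<in> set L"
  proof -
  assume "(a,b) \<in> es L"
  then have "a \<in> set L" "b \<in> set (tl L)" unfolding es_def by (auto dest: set_zip_leftD set_zip_rightD)
  then show ?thesis by (cases L) auto
qed

lemma goode_height: "goode pos \<gamma> (a,b) \<Longrightarrow> snd (pos a) < snd (pos b)"
proof -
  assume g: "goode pos \<gamma> (a,b)"
  then have sm: "strict_mono_on {0..1} (\<lambda>r. snd (\<gamma> (a,b) r))" unfolding goode_def by blast
  have "(\<lambda>r. snd (\<gamma> (a,b) r)) 0 < (\<lambda>r. snd (\<gamma> (a,b) r)) 1"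
    by (rule strict_mono_onD[OF sm]) auto
  then show ?thesis using g unfolding goode_def pathstart_def pathfinish_def by simp
qed

lemma goode_pt_height:
  assumes "goode pos \<gamma> (a,b)" "r \<in> {0..1}"
  shows "snd (pos a) \<le> snd (\<gamma> (a,b) r) \<and> snd (\<gamma> (a,b) r) \<le> snd (pos b)"
proof -
  have sm: "strict_mono_on {0..1} (\<lambda>r. snd (\<gamma> (a,b) r))" and e: "\<gamma> (a,b) 0 = pos a" "\<gamma> (a,b) 1 = pos b"
    using assms(1) unfolding goode_def pathstart_def pathfinish_def by auto
  have "snd (\<gamma> (a,b) 0) \<le> snd (\<gamma> (a,b) r)"
  proof (cases "r = 0")
    case False
    then have "(\<lambda>r. snd (\<gamma> (a,b) r)) 0 < (\<lambda>r. snd (\<gamma> (a,b) r)) r"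
      using assms(2) by (intro strict_mono_onD[OF sm]) simp_all
    then show ?thesis by simp
  qed simp
  moreover have "snd (\<gamma> (a,b) r) \<le> snd (\<gamma> (a,b) 1)"
  proof (cases "r = 1")
    case False
    then have "(\<lambda>r. snd (\<gamma> (a,b) r)) r < (\<lambda>r. snd (\<gamma> (a,b) r)) 1"
      using assms(2) by (intro strict_mono_onD[OF sm]) simp_all
    then show ?thesis by simp
  qed simp
  ultimately show ?thesis using e by simp
qed

lemma heights:
  assumes "dipath V E a b L" "\<forall>e\<in>E. goode pos \<gamma> e" "i < j" "j < length L"
  shows "snd (pos (L!i)) < snd (pos (L!j))"
  using assms(3,4)
proof (induction j)
  case 0 then show ?case by simp
next
  case (Suc j)
  have "\<forall>i. Suc i < length L \<longrightarrow> (L ! i, L ! Suc i) \<in> E" using assms(1) unfolding dipath_def by blast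
  then have "(L!j, L!Suc j) \<in> E" using Suc.prems by blast
  then have "goode pos \<gamma> (L!j, L!Suc j)" using assms(2) by blast
  then have h: "snd (pos (L!j)) < snd (pos (L!Suc j))" by (rule goode_height)
  show ?case
  proof (cases "i = j")
    case True then show ?thesis using h by simp
  next
    case False
    then have "i < j" using Suc.prems by simp
    then have "snd (pos (L!i)) < snd (pos (L!j))" using Suc.IH Suc.prems by simp
    then show ?thesis using h by simp
  qed
qed

lemma in_take_nth: "distinct L \<Longrightarrow> i < length L \<Longrightarrow> L!i \<in> set (take a L) \<longleftrightarrow> i < a"
  proof
  assume "distinct L" "i < length L" "L!i \<in> set (take a L)"
  then obtain k where "k < min a (length L)" "take a L ! k = L!i" by (auto simp: in_set_conv_nth)
  then show "i < a" using \<open>distinct L\<close> \<open>i < length L\<close> nth_eq_iff_index_eq by fastforce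
next
  assume "distinct L" "i < length L" "i < a"
  then show "L!i \<in> set (take a L)" by (metis in_set_conv_nth length_take min_less_iff_conj nth_take)
qed

lemma in_drop_nth: "distinct L \<Longrightarrow> i < length L \<Longrightarrow> L!i \<in> set (drop c L) \<longleftrightarrow> c \<le> i"
proof
  assume d: "distinct L" "i < length L" "L!i \<in> set (drop c L)"
  then obtain k where "k < length L - c" "drop c L ! k = L!i" by (auto simp: in_set_conv_nth)
  then have "L!(c+k) = L!i" "c + k < length L" by auto
  then show "c \<le> i" using d nth_eq_iff_index_eq by fastforce
next
  assume d: "distinct L" "i < length L" "c \<le> i"
  then have "drop c L ! (i - c) = L!i" "i - c < length (drop c L)" by auto
  then show "L!i \<in> set (drop c L)" by (metis nth_mem)
qed



lemma single_list: "distinct L \<Longrightarrow> L \<noteq> [] \<Longrightarrow> hd L = last L \<Longrightarrow> L = [hd L]"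
proof (cases L)
  case (Cons x r)
  assume d: "distinct L" "hd L = last L"
  show ?thesis
  proof (cases r)
    case (Cons y r')
    then have "last L \<in> set r" using \<open>L = x # r\<close> by simp
    moreover have "x \<notin> set r" using d \<open>L = x # r\<close> by simp
    ultimately show ?thesis using d \<open>L = x # r\<close> by simp
  qed (simp add: Cons)
qed simp

theorem lemma9:
  fixes V :: "'v set" and E :: "('v \<times> 'v) set"
    and pos :: "'v \<Rightarrow> real \<times> real" and \<gamma> :: "'v \<times> 'v \<Rightarrow> real \<Rightarrow> real \<times> real"
    and s t :: 'v and P P' :: "'v list"
  assumes "digraph V E"
    and "upward_planar_drawing V E pos \<gamma>"
    and "s \<in> V" and "t \<in> V"
    and "dipath V E s t P"
    and "dipath V E s t P'"
    and "path_points pos \<gamma> P' \<inter> Right (path_points pos \<gamma> P) (pos s) (pos t) \<noteq> {}"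
  shows "\<exists>Q. dipath V E s t Q \<and>
           path_points pos \<gamma> Q \<subseteq> path_points pos \<gamma> P \<union> Right (path_points pos \<gamma> P) (pos s) (pos t) \<and>
           path_points pos \<gamma> Q \<inter> Right (path_points pos \<gamma> P) (pos s) (pos t) \<noteq> {}"
proof -
  have U: "inj_on pos V \<and>
     (\<forall>e\<in>E. arc (\<gamma> e) \<and> pathstart (\<gamma> e) = pos (fst e) \<and> pathfinish (\<gamma> e) = pos (snd e)
        \<and> strict_mono_on {0..1} (\<lambda>r. snd (\<gamma> e r))) \<and>
     (\<forall>e\<in>E. \<forall>w\<in>V. pos w \<in> path_image (\<gamma> e) \<longrightarrow> w = fst e \<or> w = snd e) \<and>
     (\<forall>e1\<in>E. \<forall>e2\<in>E. e1 \<noteq> e2 \<longrightarrow>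
        path_image (\<gamma> e1) \<inter> path_image (\<gamma> e2) \<subseteq> pos ` ({fst e1, snd e1} \<inter> {fst e2, snd e2}))"
    using assms(2) unfolding upward_planar_drawing_def .
  have ge: "\<forall>e\<in>E. goode pos \<gamma> e" unfolding goode_def using U by (elim conjE)
  have vert: "\<forall>e\<in>E. \<forall>w\<in>V. pos w \<in> path_image (\<gamma> e) \<longrightarrow> w = fst e \<or> w = snd e"
    using U by (elim conjE)
  have cross: "\<forall>e1\<in>E. \<forall>e2\<in>E. e1 \<noteq> e2 \<longrightarrow>
        path_image (\<gamma> e1) \<inter> path_image (\<gamma> e2) \<subseteq> pos ` ({fst e1, snd e1} \<inter> {fst e2, snd e2})"
    using U by (elim conjE)
  define PP where "PP = path_points pos \<gamma> P"
  define RR where "RR = Right PP (pos s) (pos t)"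
  have PR: "PP \<inter> RR = {}" unfolding RR_def Right_def by auto
  have P0: "P \<noteq> []" "hd P = s" "last P = t" "distinct P" "set P \<subseteq> V" "es P \<subseteq> E"
    using assms(5) unfolding dipath_es by blast+
  have P1: "P' \<noteq> []" "hd P' = s" "last P' = t" "distinct P'" "set P' \<subseteq> V" "es P' \<subseteq> E"
    using assms(6) unfolding dipath_es by blast+
  have sP: "s \<in> set P" "t \<in> set P" using P0 by auto
  have esPP: "\<And>e. e \<in> es P \<Longrightarrow> path_image (\<gamma> e) \<subseteq> PP" unfolding PP_def path_points_es by blast
  have setPP: "pos ` set P \<subseteq> PP" unfolding PP_def path_points_es by blast
  have ass7: "path_points pos \<gamma> P' \<inter> RR \<noteq> {}" using assms(7) unfolding RR_def PP_def .
  show ?thesis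
  proof (cases "s = t")
    case True
    have "P = [hd P]" using single_list[of P] P0 True by simp
    moreover have "P' = [hd P']" using single_list[of P'] P1 True by simp
    ultimately have "P = [s]" "P' = [s]" using P0(2) P1(2) by simp_all
    then have "path_points pos \<gamma> P' = PP" unfolding PP_def by simp
    then show ?thesis using ass7 PR by blast
  next
    case st: False
    have lP: "2 \<le> length P"
    proof (rule ccontr)
      assume "\<not> 2 \<le> length P"
      then have "length P = 1" using P0(1) by (cases P) (auto simp: Suc_le_eq)
      then show False using P0 st by (cases P) auto
    qed
    define g where "g = pl \<gamma> P"
    have geP: "\<forall>e\<in>es P. goode pos \<gamma> e" using ge P0(6) by blast
    have gP: "path g \<and> pathstart g = pos (hd P) \<and> pathfinish g = pos (last P)
      \<and> strict_mono_on {0..1} (\<lambda>r. snd (g r)) \<and> path_image g = path_points pos \<gamma> P"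
      unfolding g_def by (rule pl_props[OF lP geP])
    have gs: "pathstart g = pos (hd P)" and gt: "pathfinish g = pos (last P)"
      and gi: "path_image g = path_points pos \<gamma> P" using gP by blast+
    have g0: "g 0 = pos s" "g 1 = pos t" "g ` {0..1} = PP"
    proof -
      show "g 0 = pos s" using gs P0(2) unfolding pathstart_def by simp
      show "g 1 = pos t" using gt P0(3) unfolding pathfinish_def by simp
      show "g ` {0..1} = PP" using gi unfolding path_image_def PP_def .
    qed
    define strip where "strip = {z::real\<times>real. snd (pos s) \<le> snd z \<and> snd z \<le> snd (pos t)}"
    have sepC: "z \<in> RR" if "connected C" "C \<subseteq> strip" "C \<inter> PP = {}" "p \<in> C" "p \<in> RR" "z \<in> C" for C p z
    proof -
      have RR': "RR = Right (g`{0..1}) (g 0) (g 1)" unfolding RR_def g0 ..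
      have strip': "strip = {z. snd (g 0) \<le> snd z \<and> snd z \<le> snd (g 1)}" unfolding strip_def g0 ..
      have "z \<in> Right (g`{0..1}) (g 0) (g 1)"
      proof (rule sep[of g C p])
        show "path g" using gP by blast
        show "strict_mono_on {0..1} (\<lambda>r. snd (g r))" using gP by blast
        show "connected C" by fact
        show "C \<subseteq> {z. snd (g 0) \<le> snd z \<and> snd z \<le> snd (g 1)}" using that(2) unfolding strip' .
        show "C \<inter> g ` {0..1} = {}" using that(3) unfolding g0 .
        show "p \<in> C" by fact
        show "p \<in> Right (g ` {0..1}) (g 0) (g 1)" using that(5) unfolding RR' .
        show "z \<in> C" by fact
      qed
      then show ?thesis unfolding RR' .
    qed
    define m where "m = length P'"
    define q where "q l = P' ! l" for l
    define ed where "ed l = (P' ! l, P' ! Suc l)" for l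
    have eE: "ed l \<in> E" if "Suc l < m" for l
    proof -
      have "ed l \<in> es P'" unfolding es_nth ed_def using that unfolding m_def by blast
      then show ?thesis using P1(6) by blast
    qed
    have eg: "goode pos \<gamma> (ed l)" if "Suc l < m" for l using eE[OF that] ge by blast
    have arcs: "arc (\<gamma> (ed l))" "\<gamma> (ed l) 0 = pos (q l)" "\<gamma> (ed l) 1 = pos (q (Suc l))" if "Suc l < m" for l
      using eg[OF that] unfolding goode_def ed_def q_def pathstart_def pathfinish_def by auto
    have q0: "q 0 = s" using P1 unfolding q_def by (simp add: hd_conv_nth)
    have m2: "2 \<le> m"
    proof (rule ccontr)
      assume "\<not> 2 \<le> m"
      then have "length P' = 1" using P1(1) unfolding m_def by (cases P') (auto simp: Suc_le_eq)
      then show False using P1 st by (cases P') auto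
    qed
    have qm: "q (m - 1) = t" using P1 unfolding q_def m_def by (simp add: last_conv_nth)
    have vstrip: "pos (q l) \<in> strip" if "l < m" for l
    proof -
      have "snd (pos s) \<le> snd (pos (q l))"
      proof (cases "l = 0")
        case False
        then show ?thesis using heights[OF assms(6) ge, of 0 l] that q0 unfolding q_def m_def by auto
      qed (simp add: q0)
      moreover have "snd (pos (q l)) \<le> snd (pos t)"
      proof (cases "l = m - 1")
        case False
        then have "l < m - 1" using that by simp
        then have "snd (pos (P'!l)) < snd (pos (P'!(m-1)))" using heights[OF assms(6) ge, of l "m - 1"] m2 unfolding m_def by simp
        then show ?thesis using qm unfolding q_def by simp
      next
        case True
        then have "q l = t" using qm by simp
        then show ?thesis by simp
      qed
      ultimately show ?thesis unfolding strip_def by auto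
    qed
    have estrip: "\<gamma> (ed l) r \<in> strip" if "Suc l < m" "r \<in> {0..1}" for l r
    proof -
      have "snd (pos (q l)) \<le> snd (\<gamma> (ed l) r) \<and> snd (\<gamma> (ed l) r) \<le> snd (pos (q (Suc l)))"
        using goode_pt_height[of pos \<gamma> "q l" "q (Suc l)" r] eg[OF that(1)] that(2)
        unfolding ed_def q_def by simp
      moreover have "pos (q l) \<in> strip" "pos (q (Suc l)) \<in> strip" using vstrip that by auto
      ultimately show ?thesis unfolding strip_def by auto
    qed
    have qV: "q l \<in> V" if "l < m" for l using P1(5) that unfolding q_def m_def by auto
    have avoid: "\<gamma> (ed l) ` T \<inter> PP = {}"
      if l: "Suc l < m" and nE: "ed l \<notin> es P" and T: "T \<subseteq> {0..1}"
        and T0: "0 \<in> T \<Longrightarrow> q l \<notin> set P" and T1: "1 \<in> T \<Longrightarrow> q (Suc l) \<notin> set P" for l T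
    proof (rule ccontr)
      assume "\<gamma> (ed l) ` T \<inter> PP \<noteq> {}"
      then obtain r where r: "r \<in> T" "\<gamma> (ed l) r \<in> PP" by auto
      have rI: "r \<in> {0..1}" using r T by auto
      have zimg: "\<gamma> (ed l) r \<in> path_image (\<gamma> (ed l))" using rI unfolding path_image_def by auto
      obtain w where w: "w \<in> set P" "\<gamma> (ed l) r = pos w" "w = q l \<or> w = q (Suc l)"
      proof -
        have "\<gamma> (ed l) r \<in> pos ` set P \<or> (\<exists>e2\<in>es P. \<gamma> (ed l) r \<in> path_image (\<gamma> e2))"
          using r(2) unfolding PP_def path_points_es by blast
        then show ?thesis
        proof
          assume "\<gamma> (ed l) r \<in> pos ` set P"
          then obtain w where w: "w \<in> set P" "\<gamma> (ed l) r = pos w" by auto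
          have "w \<in> V" using w P0(5) by auto
          then have "w = fst (ed l) \<or> w = snd (ed l)" using vert eE[OF l] zimg w(2) by metis
          then show ?thesis using that w unfolding ed_def q_def by auto
        next
          assume "\<exists>e2\<in>es P. \<gamma> (ed l) r \<in> path_image (\<gamma> e2)"
          then obtain e2 where e2: "e2 \<in> es P" "\<gamma> (ed l) r \<in> path_image (\<gamma> e2)" by blast
          have "e2 \<noteq> ed l" using e2 nE by blast
          moreover have "e2 \<in> E" using e2 P0(6) by blast
          ultimately have "\<gamma> (ed l) r \<in> pos ` ({fst (ed l), snd (ed l)} \<inter> {fst e2, snd e2})"
            using cross eE[OF l] zimg e2(2) by blast
          then obtain w where w: "w \<in> {fst (ed l), snd (ed l)}" "w \<in> {fst e2, snd e2}" "\<gamma> (ed l) r = pos w"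
            by blast
          have "w \<in> set P" using w(2) es_set[of "fst e2" "snd e2" P] e2(1) by auto
          then show ?thesis using that w unfolding ed_def q_def by auto
        qed
      qed
      have inj: "inj_on (\<gamma> (ed l)) {0..1}" using arcs(1)[OF l] unfolding arc_def by blast
      show False using w(3)
      proof
        assume "w = q l"
        then have "\<gamma> (ed l) r = \<gamma> (ed l) 0" using w(2) arcs(2)[OF l] by simp
        then have "r = 0" using inj rI by (auto dest: inj_onD)
        then show False using T0 r(1) w(1) \<open>w = q l\<close> by blast
      next
        assume "w = q (Suc l)"
        then have "\<gamma> (ed l) r = \<gamma> (ed l) 1" using w(2) arcs(3)[OF l] by simp
        then have "r = 1" using inj rI by (auto dest: inj_onD)
        then show False using T1 r(1) w(1) \<open>w = q (Suc l)\<close> by blast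
      qed
    qed
    have conn: "connected (\<gamma> (ed l) ` T)" if "Suc l < m" "T \<subseteq> {0..1}" "connected T" for l T
    proof -
      have "continuous_on {0..1} (\<gamma> (ed l))" using arcs(1)[OF that(1)] unfolding arc_def path_def by blast
      then show ?thesis using connected_continuous_image continuous_on_subset that by blast
    qed
    have cstrip: "\<gamma> (ed l) ` T \<subseteq> strip" if "Suc l < m" "T \<subseteq> {0..1}" for l T
      using estrip that by blast
    define Rg where "Rg l \<longleftrightarrow> \<gamma> (ed l) (1/2) \<in> RR" for l
    have KB: "pos (q l) \<in> RR \<longleftrightarrow> Rg l" if "Suc l < m" "ed l \<notin> es P" "q l \<notin> set P" for l
    proof -
      let ?C = "\<gamma> (ed l) ` {0..<1}"
      have C: "connected ?C" "?C \<subseteq> strip" "?C \<inter> PP = {}"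
      proof -
        show "connected ?C" by (rule conn[OF that(1)]) auto
        show "?C \<subseteq> strip" by (rule cstrip[OF that(1)]) auto
        show "?C \<inter> PP = {}" by (rule avoid[OF that(1,2)]) (use that(3) in auto)
      qed
      have "pos (q l) \<in> ?C" using arcs(2)[OF that(1)] by (metis atLeastLessThan_iff image_eqI order_refl zero_less_one)
      moreover have "\<gamma> (ed l) (1/2) \<in> ?C" by auto
      ultimately show ?thesis using sepC[OF C] unfolding Rg_def by blast
    qed
    have KC: "pos (q (Suc l)) \<in> RR \<longleftrightarrow> Rg l" if "Suc l < m" "ed l \<notin> es P" "q (Suc l) \<notin> set P" for l
    proof -
      let ?C = "\<gamma> (ed l) ` {0<..1}"
      have C: "connected ?C" "?C \<subseteq> strip" "?C \<inter> PP = {}"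
      proof -
        show "connected ?C" by (rule conn[OF that(1)]) auto
        show "?C \<subseteq> strip" by (rule cstrip[OF that(1)]) auto
        show "?C \<inter> PP = {}" by (rule avoid[OF that(1,2)]) (use that(3) in auto)
      qed
      have "pos (q (Suc l)) \<in> ?C" using arcs(3)[OF that(1)] by (metis greaterThanAtMost_iff image_eqI order_refl zero_less_one)
      moreover have "\<gamma> (ed l) (1/2) \<in> ?C" by auto
      ultimately show ?thesis using sepC[OF C] unfolding Rg_def by blast
    qed
    have KD: "\<gamma> (ed l) r \<in> RR" if "Suc l < m" "ed l \<notin> es P" "Rg l" "r \<in> {0<..<1}" for l r
    proof -
      let ?C = "\<gamma> (ed l) ` {0<..<1}"
      have C: "connected ?C" "?C \<subseteq> strip" "?C \<inter> PP = {}"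
      proof -
        show "connected ?C" by (rule conn[OF that(1)]) auto
        show "?C \<subseteq> strip" by (rule cstrip[OF that(1)]) auto
        show "?C \<inter> PP = {}" by (rule avoid[OF that(1,2)]) auto
      qed
      have "\<gamma> (ed l) (1/2) \<in> ?C" by auto
      moreover have "\<gamma> (ed l) r \<in> ?C" using that(4) by auto
      ultimately show ?thesis using sepC[OF C] that(3) unfolding Rg_def by blast
    qed
    have notE1: "ed l \<notin> es P" if "q l \<notin> set P" for l
      using that es_set[of "q l" "q (Suc l)" P] unfolding ed_def q_def by blast
    have notE2: "ed l \<notin> es P" if "q (Suc l) \<notin> set P" for l
      using that es_set[of "q l" "q (Suc l)" P] unfolding ed_def q_def by blast
    have V1: "\<exists>i. Suc i < m \<and> ed i \<notin> es P \<and> Rg i" if "l < m" "pos (q l) \<in> RR" for l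
    proof -
      have nq: "q l \<notin> set P" using that(2) PR setPP by blast
      have "l \<noteq> m - 1" using nq qm sP by auto
      then have "Suc l < m" using that(1) by auto
      then show ?thesis using KB[OF _ notE1[OF nq] nq] that(2) notE1[OF nq] by blast
    qed
    obtain i where i: "Suc i < m" "ed i \<notin> es P" "Rg i"
    proof -
      obtain z where z: "z \<in> path_points pos \<gamma> P'" "z \<in> RR" using ass7 by blast
      have "(\<exists>l<m. z = pos (q l)) \<or> (\<exists>l. Suc l < m \<and> z \<in> path_image (\<gamma> (ed l)))"
        using z(1) unfolding path_points_def q_def ed_def m_def by (auto simp: in_set_conv_nth)
      then show ?thesis
      proof
        assume "\<exists>l<m. z = pos (q l)"
        then show ?thesis using V1 z(2) that by blast
      next
        assume "\<exists>l. Suc l < m \<and> z \<in> path_image (\<gamma> (ed l))"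
        then obtain l r where l: "Suc l < m" "r \<in> {0..1}" "z = \<gamma> (ed l) r"
          unfolding path_image_def by blast
        show ?thesis
        proof (cases "r = 0 \<or> r = 1")
          case True
          then show ?thesis
          proof
            assume "r = 0"
            then have "z = pos (q l)" using l arcs(2)[OF l(1)] by simp
            then show ?thesis using V1[of l] l(1) z(2) that by auto
          next
            assume "r = 1"
            then have "z = pos (q (Suc l))" using l arcs(3)[OF l(1)] by simp
            then show ?thesis using V1[of "Suc l"] l(1) z(2) that by auto
          qed
        next
          case False
          then have rI: "r \<in> {0<..<1}" using l(2) by auto
          have nE: "ed l \<notin> es P"
          proof
            assume "ed l \<in> es P"
            then have "z \<in> PP" using esPP l(2,3) unfolding path_image_def by blast
            then show False using z(2) PR by blast
          qed
          let ?C = "\<gamma> (ed l) ` {0<..<1}"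
          have C: "connected ?C" "?C \<subseteq> strip" "?C \<inter> PP = {}"
          proof -
            show "connected ?C" by (rule conn[OF l(1)]) auto
            show "?C \<subseteq> strip" by (rule cstrip[OF l(1)]) auto
            show "?C \<inter> PP = {}" by (rule avoid[OF l(1) nE]) auto
          qed
          have "\<gamma> (ed l) (1/2) \<in> ?C" by auto
          moreover have "z \<in> ?C" using rI l(3) by auto
          ultimately have "Rg l" using sepC[OF C] z(2) unfolding Rg_def by blast
          then show ?thesis using that l(1) nE by blast
        qed
      qed
    qed
    define J where "J = {j. j \<le> i \<and> q j \<in> set P}"
    define K where "K = {k. i < k \<and> k < m \<and> q k \<in> set P}"
    define j0 where "j0 = Max J"
    define k0 where "k0 = Min K"
    have finJ: "finite J" unfolding J_def by simp
    have finK: "finite K" unfolding K_def by simp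
    have J0: "0 \<in> J" unfolding J_def using q0 sP by simp
    have Km: "m - 1 \<in> K" unfolding K_def using qm sP i(1) by simp
    have j0J: "j0 \<in> J" unfolding j0_def using finJ J0 Max_in by blast
    have k0K: "k0 \<in> K" unfolding k0_def using finK Km Min_in by blast
    have j0i: "j0 \<le> i" and qj0: "q j0 \<in> set P" using j0J unfolding J_def by auto
    have ik0: "i < k0" and k0m: "k0 < m" and qk0: "q k0 \<in> set P" using k0K unfolding K_def by auto
    have between: "q l \<notin> set P" if "j0 < l" "l < k0" for l
    proof
      assume ql: "q l \<in> set P"
      show False
      proof (cases "l \<le> i")
        case True
        then have "l \<in> J" unfolding J_def using ql by simp
        then have "l \<le> j0" unfolding j0_def by (rule Max_ge[OF finJ])
        then show False using that by simp
      next
        case False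
        then have "l \<in> K" unfolding K_def using ql that k0m by simp
        then have "k0 \<le> l" unfolding k0_def by (rule Min_le[OF finK])
        then show False using that by simp
      qed
    qed
    have up: "ed (i+d) \<notin> es P \<and> Rg (i+d)" if "i + d < k0" for d
      using that
    proof (induction d)
      case 0 then show ?case using i by simp
    next
      case (Suc d)
      let ?l = "i + d"
      have IH: "ed ?l \<notin> es P" "Rg ?l" using Suc by auto
      have l1: "Suc ?l < m" using Suc.prems k0m by simp
      have nq: "q (Suc ?l) \<notin> set P" using between[of "Suc ?l"] Suc.prems j0i by simp
      have "pos (q (Suc ?l)) \<in> RR" using KC[OF l1 IH(1) nq] IH(2) by blast
      moreover have l2: "Suc (Suc ?l) < m" using Suc.prems k0m by simp
      moreover have "ed (Suc ?l) \<notin> es P" by (rule notE1[OF nq])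
      ultimately have "Rg (Suc ?l)" using KB[OF l2 _ nq] by blast
      then show ?case using \<open>ed (Suc ?l) \<notin> es P\<close> by simp
    qed
    have down: "ed (i-d) \<notin> es P \<and> Rg (i-d)" if "d \<le> i - j0" for d
      using that
    proof (induction d)
      case 0 then show ?case using i by simp
    next
      case (Suc d)
      let ?l = "i - d"
      have IH: "ed ?l \<notin> es P" "Rg ?l" using Suc by auto
      have lj: "j0 < ?l" using Suc.prems by simp
      have lm: "Suc ?l < m" using i(1) by simp
      have nq: "q ?l \<notin> set P" using between[of ?l] lj ik0 by simp
      have "pos (q ?l) \<in> RR" using KB[OF lm IH(1) nq] IH(2) by blast
      have eq: "Suc (i - Suc d) = ?l" using Suc.prems by simp
      have lm': "Suc (i - Suc d) < m" using eq lm by simp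
      have nq': "q (Suc (i - Suc d)) \<notin> set P" using nq eq by simp
      have nE': "ed (i - Suc d) \<notin> es P" by (rule notE2[OF nq'])
      have "pos (q (Suc (i - Suc d))) \<in> RR" using \<open>pos (q ?l) \<in> RR\<close> eq by simp
      then have "Rg (i - Suc d)" using KC[OF lm' nE' nq'] by blast
      then show ?case using nE' by simp
    qed
    have allR: "ed l \<notin> es P \<and> Rg l" if "j0 \<le> l" "l < k0" for l
    proof (cases "i \<le> l")
      case True
      then show ?thesis using up[of "l - i"] that by simp
    next
      case False
      then show ?thesis using down[of "i - l"] that by simp
    qed
    have vR: "pos (q l) \<in> RR" if "j0 < l" "l < k0" for l
    proof -
      have lm: "Suc l < m" using that k0m by simp
      have nq: "q l \<notin> set P" using between that by blast
      show ?thesis using KB[OF lm notE1[OF nq] nq] allR[of l] that by simp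
    qed
    have edgeR: "path_image (\<gamma> (ed l)) \<subseteq> PP \<union> RR" if "j0 \<le> l" "l < k0" for l
    proof
      fix z assume "z \<in> path_image (\<gamma> (ed l))"
      then obtain r where r: "r \<in> {0..1}" "z = \<gamma> (ed l) r" unfolding path_image_def by blast
      have lm: "Suc l < m" using that k0m by simp
      show "z \<in> PP \<union> RR"
      proof (cases "r = 0")
        case True
        then have "z = pos (q l)" using r arcs(2)[OF lm] by simp
        then show ?thesis
        proof (cases "l = j0")
          case True then show ?thesis using qj0 setPP \<open>z = pos (q l)\<close> by blast
        next
          case False then show ?thesis using vR[of l] that \<open>z = pos (q l)\<close> by simp
        qed
      next
        case r0: False
        show ?thesis
        proof (cases "r = 1")
          case True
          then have "z = pos (q (Suc l))" using r arcs(3)[OF lm] by simp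
          then show ?thesis
          proof (cases "Suc l = k0")
            case True then show ?thesis using qk0 setPP \<open>z = pos (q (Suc l))\<close> by blast
          next
            case False then show ?thesis using vR[of "Suc l"] that \<open>z = pos (q (Suc l))\<close> by simp
          qed
        next
          case False
          then have rI: "r \<in> {0<..<1}" using r0 r(1) by auto
          have "ed l \<notin> es P" "Rg l" using allR[OF that] by auto
          then have "\<gamma> (ed l) r \<in> RR" using KD[OF lm _ _ rI] by blast
          then show ?thesis using r(2) by blast
        qed
      qed
    qed
    obtain a where a: "a < length P" "P ! a = q j0" using qj0 by (auto simp: in_set_conv_nth)
    obtain b where b: "b < length P" "P ! b = q k0" using qk0 by (auto simp: in_set_conv_nth)
    have hj: "snd (pos (q j0)) < snd (pos (q k0))"
      using heights[OF assms(6) ge, of j0 k0] j0i ik0 k0m unfolding q_def m_def by simp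
    have ab: "a < b"
    proof (rule ccontr)
      assume "\<not> a < b"
      then have "b < a \<or> b = a" by auto
      then show False
      proof
        assume "b < a"
        then have "snd (pos (P!b)) < snd (pos (P!a))" using heights[OF assms(5) ge, of b a] a by simp
        then show False using hj a b by simp
      next
        assume "b = a" then show False using hj a b by simp
      qed
    qed
    define M where "M = map (\<lambda>l. P' ! l) [j0..<Suc k0]"
    define A where "A = take a P"
    define D where "D = drop (Suc b) P"
    define Q where "Q = A @ M @ D"
    have jk: "j0 < k0" using j0i ik0 by simp
    have esM: "es M = ed ` {j0..<k0}"
    proof -
      have "es M = (\<lambda>l. (P'!l, P'!Suc l)) ` {l. j0 \<le> l \<and> Suc l < Suc k0}"
        unfolding M_def by (rule es_map_upt)
      also have "{l. j0 \<le> l \<and> Suc l < Suc k0} = {j0..<k0}" by auto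
      finally show ?thesis unfolding ed_def by simp
    qed
    have setM: "set M = q ` {j0..k0}" unfolding M_def q_def by auto
    have Mne: "M \<noteq> []" unfolding M_def using jk by simp
    have hdM: "hd M = P!a" unfolding M_def using a jk by (simp add: q_def upt_rec)
    have lastM: "last M = P!b" unfolding M_def using b jk by (simp add: q_def)
    have esQ1: "es Q \<subseteq> es P \<union> ed ` {j0..<k0}"
    proof -
      have "es Q = es A \<union> es (M @ D) \<union> (if A \<noteq> [] \<and> M @ D \<noteq> [] then {(last A, hd (M @ D))} else {})"
        unfolding Q_def by (rule es_append)
      moreover have "es (M @ D) = es M \<union> es D \<union> (if M \<noteq> [] \<and> D \<noteq> [] then {(last M, hd D)} else {})"
        by (rule es_append)
      moreover have "es A \<subseteq> es P" unfolding A_def by (rule es_take)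
      moreover have "es D \<subseteq> es P" unfolding D_def by (rule es_drop)
      moreover have "(last A, hd (M @ D)) \<in> es P" if "A \<noteq> []"
      proof -
        have a0: "0 < a" using that unfolding A_def by (cases a) auto
        have tne: "take a P \<noteq> []" using a0 P0(1) by simp
        have "last (take a P) = take a P ! (length (take a P) - 1)" using tne by (rule last_conv_nth)
        also have "\<dots> = P ! (a - 1)" using a0 a(1) by simp
        finally have "last A = P ! (a - 1)" unfolding A_def .
        moreover have "hd (M @ D) = P ! Suc (a - 1)" using hdM Mne a0 by simp
        ultimately show ?thesis unfolding es_nth using a(1) a0 by auto
      qed
      moreover have "(last M, hd D) \<in> es P" if "D \<noteq> []"
      proof -
        have "Suc b < length P" using that unfolding D_def by simp
        moreover have "hd D = P ! Suc b" unfolding D_def using calculation by (simp add: hd_drop_conv_nth)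
        ultimately show ?thesis unfolding es_nth using lastM by auto
      qed
      ultimately show ?thesis using esM by (auto split: if_splits)
    qed
    have esQ2: "ed ` {j0..<k0} \<subseteq> es Q"
    proof -
      have "es (M @ D) \<subseteq> es Q" unfolding Q_def by (subst (2) es_append) auto
      moreover have "es M \<subseteq> es (M @ D)" by (subst es_append) auto
      ultimately show ?thesis using esM by auto
    qed
    have distM: "distinct M" unfolding M_def
    proof (rule distinct_map[THEN iffD2], intro conjI)
      show "distinct [j0..<Suc k0]" by simp
      show "inj_on ((!) P') (set [j0..<Suc k0])"
        using P1(4) k0m unfolding m_def by (auto simp: inj_on_def nth_eq_iff_index_eq)
    qed
    have Mint: "x \<notin> set P" if x1: "x \<in> set M" "x \<noteq> P!a" "x \<noteq> P!b" for x
    proof -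
      obtain l where l: "j0 \<le> l" "l \<le> k0" "x = q l" using x1(1) setM by auto
      have "l \<noteq> j0" using l x1(2) a by auto
      moreover have "l \<noteq> k0" using l x1(3) b by auto
      ultimately show ?thesis using between[of l] l by simp
    qed
    have aA: "P!a \<notin> set A" unfolding A_def using in_take_nth[OF P0(4) a(1)] by simp
    have bA: "P!b \<notin> set A" unfolding A_def using in_take_nth[OF P0(4) b(1)] ab by simp
    have aD: "P!a \<notin> set D" unfolding D_def using in_drop_nth[OF P0(4) a(1)] ab by simp
    have bD: "P!b \<notin> set D" unfolding D_def using in_drop_nth[OF P0(4) b(1)] by simp
    have AD: "set A \<inter> set D = {}" unfolding A_def D_def
      using set_take_disj_set_drop_if_distinct[OF P0(4), of a "Suc b"] ab by simp
    have AP: "set A \<subseteq> set P" unfolding A_def by (rule set_take_subset)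
    have DP: "set D \<subseteq> set P" unfolding D_def by (rule set_drop_subset)
    have distQ: "distinct Q"
    proof -
      have "set A \<inter> set M = {}" using Mint aA bA AP by blast
      moreover have "set M \<inter> set D = {}" using Mint aD bD DP by blast
      moreover have "distinct A" unfolding A_def using P0(4) by simp
      moreover have "distinct D" unfolding D_def using P0(4) by simp
      ultimately show ?thesis unfolding Q_def using distM AD by auto
    qed
    have hdQ: "hd Q = s"
    proof (cases "a = 0")
      case True
      then have "A = []" unfolding A_def by simp
      then have "hd Q = P!0" unfolding Q_def using hdM Mne True by simp
      then show ?thesis using P0(1,2) by (simp add: hd_conv_nth)
    next
      case False
      then have "A \<noteq> []" "hd A = hd P" unfolding A_def using P0(1) by auto
      then show ?thesis unfolding Q_def using P0(2) by simp
    qed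
    have lastQ: "last Q = t"
    proof (cases "D = []")
      case True
      then have "length P \<le> Suc b" unfolding D_def by simp
      then have "b = length P - 1" using b(1) by simp
      then have "last M = last P" using lastM P0(1) by (simp add: last_conv_nth)
      then show ?thesis unfolding Q_def using True Mne P0(3) by simp
    next
      case False
      then have "last D = last P" unfolding D_def by simp
      then show ?thesis unfolding Q_def using False P0(3) by simp
    qed
    have setQ: "set Q \<subseteq> set P \<union> set M" unfolding Q_def using AP DP by auto
    have MV: "set M \<subseteq> V" using setM P1(5) k0m unfolding q_def m_def by auto
    have dQ: "dipath V E s t Q"
      unfolding dipath_es
    proof (intro conjI)
      show "Q \<noteq> []" unfolding Q_def using Mne by simp
      show "hd Q = s" by (rule hdQ)
      show "last Q = t" by (rule lastQ)
      show "distinct Q" by (rule distQ)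
      show "set Q \<subseteq> V" using setQ P0(5) MV by blast
      have "ed ` {j0..<k0} \<subseteq> E" using eE k0m by auto
      then show "es Q \<subseteq> E" using esQ1 P0(6) by blast
    qed
    have sub: "path_points pos \<gamma> Q \<subseteq> PP \<union> RR"
    proof -
      have "pos ` set Q \<subseteq> PP \<union> RR"
      proof
        fix z assume "z \<in> pos ` set Q"
        then obtain x where x: "x \<in> set Q" "z = pos x" by blast
        show "z \<in> PP \<union> RR"
        proof (cases "x \<in> set P")
          case True then show ?thesis using setPP x by blast
        next
          case False
          then have "x \<in> set M" using x setQ by blast
          then obtain l where l: "j0 \<le> l" "l \<le> k0" "x = q l" using setM by auto
          have "l \<noteq> j0" using l False qj0 by auto
          moreover have "l \<noteq> k0" using l False qk0 by auto
          ultimately show ?thesis using vR[of l] l x by simp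
        qed
      qed
      moreover have "path_image (\<gamma> e) \<subseteq> PP \<union> RR" if "e \<in> es Q" for e
      proof -
        have "e \<in> es P \<or> e \<in> ed ` {j0..<k0}" using esQ1 that by blast
        then show ?thesis
        proof
          assume "e \<in> es P" then show ?thesis using esPP by blast
        next
          assume "e \<in> ed ` {j0..<k0}"
          then obtain l where "l \<in> {j0..<k0}" "e = ed l" by blast
          then show ?thesis using edgeR[of l] by simp
        qed
      qed
      ultimately show ?thesis unfolding path_points_es by blast
    qed
    have ne: "path_points pos \<gamma> Q \<inter> RR \<noteq> {}"
    proof -
      have "ed j0 \<in> es Q" using esQ2 jk by auto
      then have "path_image (\<gamma> (ed j0)) \<subseteq> path_points pos \<gamma> Q" unfolding path_points_es by blast
      moreover have "\<gamma> (ed j0) (1/2) \<in> path_image (\<gamma> (ed j0))" unfolding path_image_def by auto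
      moreover have "Rg j0" using allR[of j0] jk by simp
      ultimately show ?thesis unfolding Rg_def by blast
    qed
    show ?thesis using dQ sub ne unfolding PP_def RR_def by blast
  qed
qed

end
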